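(* The $G$-invariant functions $p_1,\dots,p_5$ on $\mathscr X_2$ given by $p_1(v,w,C)=\langle v,v\rangle$, $p_2(v,w,C)=\langle w,w\rangle$, $p_3(v,w,C)=\langle Cv,w\rangle$, $p_4(v,w,C)=\operatorname{tr}(C^tC)$, $p_5(v,w,C)=\det C$ separate orbits in general position.
   Context: Identify $V_1=V_2=\mathbb C^2$ with Pauli matrices $\sigma_1=\begin{pmatrix}0&1\\1&0\end{pmatrix}$, $\sigma_2=\begin{pmatrix}0&-i\\i&0\end{pmatrix}$, $\sigma_3=\begin{pmatrix}1&0\\0&-1\end{pmatrix}$. Trace-one endomorphisms of $\mathbb C^2\otimes\mathbb C^2$ are written uniquely as $\tfrac14\big(I\otimes I+\sum_a v_a\sigma_a\otimes I+\sum_b w_bI\otimes\sigma_b+\sum_{a,b}C_{ba}\sigma_a\otimes\sigma_b\big)$, giving coordinates $(v,w,C)\in\mathbb C^3\times\mathbb C^3\times M_3(\mathbb C)$ on the space $\mathscr L_2$; $G=\mathrm{SO}_3(\mathbb C)^2$ acts by $(g_1,g_2)\cdot(v,w,C)=(g_1v,g_2w,g_2Cg_1^{-1})$. $\langle x,y\rangle=\sum_a x_ay_a$ on $\mathbb C^3$. Let $X_0$ be the subspace with $v_1=v_2=w_1=w_2=0$ and $C_{ba}=0$ whenever exactly one of $a,b$ equals $3$; $\mathscr X_2$ is the Zariski closure of $G\cdot X_0$ (equivalently of the set of two-qubit X-states), with reduced structure. A collection $f_1,\dots,f_m$ of $G$-invariant rational functions on a $G$-variety $X$ separates orbits in general position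 if there is a dense Zariski-open $U\subseteq X$ such that any $x_1,x_2\in U$ with $f_i(x_1)=f_i(x_2)$ for all $i$ lie in the same $G$-orbit. *)

theory Defs
  imports "HOL-Analysis.Analysis"
begin

text \<open>Points of L_2: triples (v, w, C) with v, w in C^3 and C a 3x3 complex matrix;
  C $ b $ a is the entry C_{ba} (row b, column a).\<close>
type_synonym pt = "(complex^3) \<times> (complex^3) \<times> (complex^3^3)"

inductive_set poly_fun :: "(pt \<Rightarrow> complex) set" where
  const: "(\<lambda>x. c) \<in> poly_fun"
| coord_v: "(\<lambda>(v, w, C). v $ i) \<in> poly_fun"
| coord_w: "(\<lambda>(v, w, C). w $ i) \<in> poly_fun"
| coord_C: "(\<lambda>(v, w, C). C $ i $ j) \<in> poly_fun"
| add: "f \<in> poly_fun \<Longrightarrow> g \<in> poly_fun \<Longrightarrow> (\<lambda>x. f x + g x) \<in> poly_fun"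
| mult: "f \<in> poly_fun \<Longrightarrow> g \<in> poly_fun \<Longrightarrow> (\<lambda>x. f x * g x) \<in> poly_fun"

definition zariski_closed :: "pt set \<Rightarrow> bool" where
  "zariski_closed S \<longleftrightarrow> (\<exists>F \<subseteq> poly_fun. S = {x. \<forall>f\<in>F. f x = 0})"

definition zariski_closure :: "pt set \<Rightarrow> pt set" where
  "zariski_closure A = \<Inter>{S. zariski_closed S \<and> A \<subseteq> S}"

definition SO3 :: "(complex^3^3) set" where
  "SO3 = {g. transpose g ** g = mat 1 \<and> det g = 1}"

definition act :: "(complex^3^3) \<times> (complex^3^3) \<Rightarrow> pt \<Rightarrow> pt" where
  "act gg x = (case gg of (g1, g2) \<Rightarrow> (case x of (v, w, C) \<Rightarrow>
      (g1 *v v, g2 *v w, g2 ** C ** matrix_inv g1)))"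

definition Gset :: "((complex^3^3) \<times> (complex^3^3)) set" where
  "Gset = SO3 \<times> SO3"

definition X0 :: "pt set" where
  "X0 = {(v, w, C). v $ 1 = 0 \<and> v $ 2 = 0 \<and> w $ 1 = 0 \<and> w $ 2 = 0 \<and>
     (\<forall>a b. (a = 3) \<noteq> (b = 3) \<longrightarrow> C $ b $ a = 0)}"

definition X2 :: "pt set" where
  "X2 = zariski_closure {act g x | g x. g \<in> Gset \<and> x \<in> X0}"

definition bil :: "complex^3 \<Rightarrow> complex^3 \<Rightarrow> complex" where
  "bil x y = (\<Sum>a\<in>UNIV. x $ a * y $ a)"

definition mtrace :: "complex^3^3 \<Rightarrow> complex" where
  "mtrace M = (\<Sum>i\<in>UNIV. M $ i $ i)"

definition p1 :: "pt \<Rightarrow> complex" where "p1 x = (case x of (v, w, C) \<Rightarrow> bil v v)"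
definition p2 :: "pt \<Rightarrow> complex" where "p2 x = (case x of (v, w, C) \<Rightarrow> bil w w)"
definition p3 :: "pt \<Rightarrow> complex" where "p3 x = (case x of (v, w, C) \<Rightarrow> bil (C *v v) w)"
definition p4 :: "pt \<Rightarrow> complex" where "p4 x = (case x of (v, w, C) \<Rightarrow> mtrace (transpose C ** C))"
definition p5 :: "pt \<Rightarrow> complex" where "p5 x = (case x of (v, w, C) \<Rightarrow> det C)"

definition pinv :: "pt \<Rightarrow> complex list" where
  "pinv x = [p1 x, p2 x, p3 x, p4 x, p5 x]"

end

theory Submission
  imports Defs
begin


lemma SO3_tt: "g \<in> SO3 \<Longrightarrow> transpose g ** g = mat 1" by (simp add: SO3_def)
lemma SO3_tt2: "g \<in> SO3 \<Longrightarrow> g ** transpose g = mat 1"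
  using matrix_left_right_inverse SO3_tt by blast
lemma SO3_det: "g \<in> SO3 \<Longrightarrow> det g = 1" by (simp add: SO3_def)

lemma SO3_inv: assumes "g \<in> SO3" shows "matrix_inv g = transpose g"
proof -
  have ex: "\<exists>A'. g ** A' = mat 1 \<and> A' ** g = mat 1" using SO3_tt[OF assms] SO3_tt2[OF assms] by blast
  define M where "M = matrix_inv g"
  have M: "g ** M = mat 1 \<and> M ** g = mat 1" unfolding M_def matrix_inv_def using someI_ex[OF ex] .
  have "M = M ** (g ** transpose g)" using SO3_tt2[OF assms] by simp
  also have "\<dots> = (M ** g) ** transpose g" by (simp add: matrix_mul_assoc)
  also have "\<dots> = transpose g" using M by simp
  finally show ?thesis unfolding M_def .
qed

lemma SO3_mult: "g \<in> SO3 \<Longrightarrow> h \<in> SO3 \<Longrightarrow> g ** h \<in> SO3"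
proof -
  assume g: "g \<in> SO3" and h: "h \<in> SO3"
  have "transpose (g ** h) ** (g ** h) = transpose h ** (transpose g ** g) ** h"
    by (simp add: matrix_transpose_mul matrix_mul_assoc)
  also have "\<dots> = mat 1" using SO3_tt[OF g] SO3_tt[OF h] by simp
  finally show ?thesis using g h by (simp add: SO3_def det_mul)
qed

lemma SO3_transpose: "g \<in> SO3 \<Longrightarrow> transpose g \<in> SO3"
  using SO3_tt2[of g] by (simp add: SO3_def det_transpose)

lemma SO3_one: "mat 1 \<in> SO3" by (simp add: SO3_def det_I)

lemma bil_mv: "bil (A *v x) y = bil x (transpose A *v y)"
proof -
  have "bil (A *v x) y = (\<Sum>a\<in>UNIV. \<Sum>j\<in>UNIV. A $ a $ j * x $ j * y $ a)"
    unfolding bil_def matrix_vector_mult_def by (simp add: sum_distrib_right)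
  also have "\<dots> = (\<Sum>j\<in>UNIV. \<Sum>a\<in>UNIV. A $ a $ j * x $ j * y $ a)" by (rule sum.swap)
  also have "\<dots> = bil x (transpose A *v y)"
    unfolding bil_def matrix_vector_mult_def transpose_def by (simp add: sum_distrib_left mult_ac)
  finally show ?thesis .
qed

lemma bil_SO3: "g \<in> SO3 \<Longrightarrow> bil (g *v x) (g *v y) = bil x y"
  by (simp add: bil_mv matrix_vector_mul_assoc SO3_tt del: transpose_matrix_vector)

lemma act_simp: "act (g1, g2) (v, w, C) = (g1 *v v, g2 *v w, g2 ** C ** matrix_inv g1)"
  by (simp add: act_def)

lemma pinv_act: assumes "g \<in> Gset" shows "pinv (act g x) = pinv x"
proof -
  obtain g1 g2 where g: "g = (g1, g2)" "g1 \<in> SO3" "g2 \<in> SO3" using assms by (auto simp: Gset_def)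
  obtain v w C where x: "x = (v, w, C)" by (cases x) auto
  have i1: "matrix_inv g1 = transpose g1" using SO3_inv g by auto
  have Cv: "(g2 ** C ** transpose g1) *v (g1 *v v) = g2 *v (C *v v)"
    by (simp add: matrix_vector_mul_assoc matrix_mul_assoc[symmetric] SO3_tt g del: transpose_matrix_vector)
  have tr: "transpose (g2 ** C ** transpose g1) ** (g2 ** C ** transpose g1) = g1 ** (transpose C ** C) ** transpose g1"
    by (simp add: matrix_transpose_mul matrix_mul_assoc) (simp add: matrix_mul_assoc[symmetric] SO3_tt g)
  have "mtrace (g1 ** (transpose C ** C) ** transpose g1) = mtrace (transpose C ** C)"
    unfolding mtrace_def trace_def[symmetric]
    by (subst trace_mul_sym) (simp add: matrix_mul_assoc SO3_tt g)
  then show ?thesis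
    by (simp add: g x act_simp i1 pinv_def p1_def p2_def p3_def p4_def p5_def bil_SO3 Cv tr det_mul det_transpose SO3_det)
qed



lemma pf_v: "(\<lambda>x. fst x $ i) \<in> poly_fun"
proof -
  have "(\<lambda>x::pt. fst x $ i) = (\<lambda>(v, w, C). v $ i)" by auto
  then show ?thesis using poly_fun.coord_v by simp
qed
lemma pf_w: "(\<lambda>x. fst (snd x) $ i) \<in> poly_fun"
proof -
  have "(\<lambda>x::pt. fst (snd x) $ i) = (\<lambda>(v, w, C). w $ i)" by auto
  then show ?thesis using poly_fun.coord_w by simp
qed
lemma pf_C: "(\<lambda>x. snd (snd x) $ i $ j) \<in> poly_fun"
proof -
  have "(\<lambda>x::pt. snd (snd x) $ i $ j) = (\<lambda>(v, w, C). C $ i $ j)" by auto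
  then show ?thesis using poly_fun.coord_C by simp
qed

lemma pf_sum: "finite A \<Longrightarrow> (\<And>a. a \<in> A \<Longrightarrow> f a \<in> poly_fun) \<Longrightarrow> (\<lambda>x. \<Sum>a\<in>A. f a x) \<in> poly_fun"
proof (induction A rule: finite_induct)
  case empty then show ?case using poly_fun.const[of 0] by simp
next
  case (insert a A)
  then show ?case by (simp add: poly_fun.add)
qed

lemma pf_prod: "finite A \<Longrightarrow> (\<And>a. a \<in> A \<Longrightarrow> f a \<in> poly_fun) \<Longrightarrow> (\<lambda>x. \<Prod>a\<in>A. f a x) \<in> poly_fun"
proof (induction A rule: finite_induct)
  case empty then show ?case using poly_fun.const[of 1] by simp
next
  case (insert a A)
  then show ?case by (simp add: poly_fun.mult)
qed

lemma pf_cmult: "f \<in> poly_fun \<Longrightarrow> (\<lambda>x. c * f x) \<in> poly_fun"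
  using poly_fun.mult[OF poly_fun.const] by blast

lemma pf_sub: "f \<in> poly_fun \<Longrightarrow> g \<in> poly_fun \<Longrightarrow> (\<lambda>x. f x - g x) \<in> poly_fun"
proof -
  assume "f \<in> poly_fun" "g \<in> poly_fun"
  then have "(\<lambda>x. f x + (-1) * g x) \<in> poly_fun" by (intro poly_fun.add pf_cmult)
  then show ?thesis by simp
qed

lemma pf_pow: "f \<in> poly_fun \<Longrightarrow> (\<lambda>x. f x ^ n) \<in> poly_fun"
  by (induction n) (auto intro: poly_fun.mult poly_fun.const)

lemma pf_p1: "p1 \<in> poly_fun"
proof -
  have eq: "p1 = (\<lambda>x. \<Sum>a\<in>UNIV. fst x $ a * fst x $ a)" by (auto simp: p1_def bil_def)
  show ?thesis unfolding eq by (intro pf_sum poly_fun.mult pf_v) simp_all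
qed
lemma pf_p2: "p2 \<in> poly_fun"
proof -
  have eq: "p2 = (\<lambda>x. \<Sum>a\<in>UNIV. fst (snd x) $ a * fst (snd x) $ a)" by (auto simp: p2_def bil_def)
  show ?thesis unfolding eq by (intro pf_sum poly_fun.mult pf_w) simp_all
qed
lemma pf_p3: "p3 \<in> poly_fun"
proof -
  have eq: "p3 = (\<lambda>x. \<Sum>a\<in>UNIV. (\<Sum>j\<in>UNIV. snd (snd x) $ a $ j * fst x $ j) * fst (snd x) $ a)"
    by (auto simp: p3_def bil_def matrix_vector_mult_def)
  show ?thesis unfolding eq by (intro pf_sum poly_fun.mult pf_w pf_v pf_C) simp_all
qed
lemma pf_p4: "p4 \<in> poly_fun"
proof -
  have eq: "p4 = (\<lambda>x. \<Sum>i\<in>UNIV. (\<Sum>k\<in>UNIV. snd (snd x) $ k $ i * snd (snd x) $ k $ i))"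
    by (auto simp: p4_def mtrace_def matrix_matrix_mult_def transpose_def)
  show ?thesis unfolding eq by (intro pf_sum poly_fun.mult pf_C) simp_all
qed
lemma pf_p5: "p5 \<in> poly_fun"
proof -
  have eq: "p5 = (\<lambda>x. \<Sum>p\<in>{p. p permutes (UNIV::3 set)}. of_int (sign p) * (\<Prod>i\<in>UNIV. snd (snd x) $ i $ p i))"
    by (auto simp: p5_def det_def)
  show ?thesis unfolding eq by (intro pf_sum poly_fun.mult pf_C pf_prod poly_fun.const) (simp_all add: finite_permutations)
qed

definition hfun :: "pt \<Rightarrow> complex" where
  "hfun x = p1 x * p2 x * p3 x * ((p1 x * p2 x * p4 x - p3 x ^ 2) ^ 2 * p3 x ^ 2 - 4 * p5 x ^ 2 * p1 x ^ 3 * p2 x ^ 3)"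

lemma pf_h: "hfun \<in> poly_fun"
  unfolding hfun_def[abs_def]
  by (intro poly_fun.mult pf_sub pf_pow pf_p1 pf_p2 pf_p3 pf_p4 pf_p5 poly_fun.const)

lemma hfun_act: "g \<in> Gset \<Longrightarrow> hfun (act g x) = hfun x"
  using pinv_act[of g x] by (simp add: pinv_def hfun_def)

definition E1 :: "pt \<Rightarrow> complex^3" where
  "E1 x = (case x of (v, w, C) \<Rightarrow> bil w w *s (C *v v) - bil (C *v v) w *s w)"
definition E2 :: "pt \<Rightarrow> complex^3" where
  "E2 x = (case x of (v, w, C) \<Rightarrow> bil v v *s (transpose C *v w) - bil (transpose C *v w) v *s v)"

definition Yset :: "pt set" where "Yset = {x. E1 x = 0 \<and> E2 x = 0}"

lemma Yset_closed: "zariski_closed Yset"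
proof -
  have e1: "(\<lambda>x. E1 x $ i) \<in> poly_fun" for i
  proof -
    have "(\<lambda>x. E1 x $ i) = (\<lambda>x. p2 x * (\<Sum>j\<in>UNIV. snd (snd x) $ i $ j * fst x $ j) - p3 x * fst (snd x) $ i)"
      by (auto simp: E1_def p2_def p3_def matrix_vector_mult_def)
    then show ?thesis by (auto intro!: pf_sum poly_fun.mult pf_w pf_v pf_C pf_sub pf_p2 pf_p3)
  qed
  have e2: "(\<lambda>x. E2 x $ i) \<in> poly_fun" for i
  proof -
    have "(\<lambda>x. E2 x $ i) = (\<lambda>x. p1 x * (\<Sum>j\<in>UNIV. snd (snd x) $ j $ i * fst (snd x) $ j) -
        (\<Sum>a\<in>UNIV. (\<Sum>j\<in>UNIV. snd (snd x) $ j $ a * fst (snd x) $ j) * fst x $ a) * fst x $ i)"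
      by (auto simp: E2_def p1_def bil_def matrix_vector_mult_def transpose_def)
    then show ?thesis by (auto intro!: pf_sum poly_fun.mult pf_w pf_v pf_C pf_sub pf_p1)
  qed
  let ?F = "range (\<lambda>i x. E1 x $ i) \<union> range (\<lambda>i x. E2 x $ i)"
  have "?F \<subseteq> poly_fun" using e1 e2 by auto
  moreover have "Yset = {x. \<forall>f\<in>?F. f x = 0}" unfolding Yset_def vec_eq_iff by auto
  ultimately show ?thesis unfolding zariski_closed_def by (intro exI[of _ ?F] conjI)
qed

lemma Z_closed: "zariski_closed {x. hfun x = 0}"
  unfolding zariski_closed_def using pf_h by (intro exI[of _ "{hfun}"]) auto



definition z1 :: "complex \<Rightarrow> complex \<Rightarrow> complex \<Rightarrow> complex \<Rightarrow> complex" where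
  "z1 A B C D = (A + D) + \<i> * (C - B)"
definition z2 :: "complex \<Rightarrow> complex \<Rightarrow> complex \<Rightarrow> complex \<Rightarrow> complex" where
  "z2 A B C D = (A + D) - \<i> * (C - B)"
definition z3 :: "complex \<Rightarrow> complex \<Rightarrow> complex \<Rightarrow> complex \<Rightarrow> complex" where
  "z3 A B C D = (A - D) + \<i> * (B + C)"
definition z4 :: "complex \<Rightarrow> complex \<Rightarrow> complex \<Rightarrow> complex \<Rightarrow> complex" where
  "z4 A B C D = (A - D) - \<i> * (B + C)"

definition rot :: "complex \<Rightarrow> complex \<Rightarrow> complex \<Rightarrow> complex \<Rightarrow> complex \<Rightarrow> complex \<Rightarrow> complex \<Rightarrow> complex \<Rightarrow> complex \<times> complex \<times> complex \<times> complex" where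
  "rot a2 b2 a1 b1 A B C D =
    (let p11 = a2; p12 = -b2; p21 = b2; p22 = a2; q11 = a1; q12 = -b1; q21 = b1; q22 = a1 in
    ((p11*A+p12*C)*q11 + (p11*B+p12*D)*q12, (p11*A+p12*C)*q21 + (p11*B+p12*D)*q22,
     (p21*A+p22*C)*q11 + (p21*B+p22*D)*q12, (p21*A+p22*C)*q21 + (p21*B+p22*D)*q22))"

lemma ii2: "\<i> * \<i> = (-1::complex)" by simp

lemma recA: "A = (z1 A B C D + z2 A B C D + z3 A B C D + z4 A B C D) / 4"
  by (simp add: z1_def z2_def z3_def z4_def field_simps)
lemma recD: "D = (z1 A B C D + z2 A B C D - z3 A B C D - z4 A B C D) / 4"
  by (simp add: z1_def z2_def z3_def z4_def field_simps)
lemma recB: "B = ((z3 A B C D - z4 A B C D) - (z1 A B C D - z2 A B C D)) / (4 * \<i>)"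
  by (simp add: z1_def z2_def z3_def z4_def field_simps)
lemma recC: "C = ((z3 A B C D - z4 A B C D) + (z1 A B C D - z2 A B C D)) / (4 * \<i>)"
  by (simp add: z1_def z2_def z3_def z4_def field_simps)

lemma z_inj:
  assumes "z1 A B C D = z1 A' B' C' D'" "z2 A B C D = z2 A' B' C' D'"
          "z3 A B C D = z3 A' B' C' D'" "z4 A B C D = z4 A' B' C' D'"
  shows "(A, B, C, D) = (A', B', C', D')"
proof -
  note ra = recA[where A=A and B=B and C=C and D=D] recA[where A=A' and B=B' and C=C' and D=D']
  note rb = recB[where A=A and B=B and C=C and D=D] recB[where A=A' and B=B' and C=C' and D=D']
  note rc = recC[where A=A and B=B and C=C and D=D] recC[where A=A' and B=B' and C=C' and D=D']
  note rd = recD[where A=A and B=B and C=C and D=D] recD[where A=A' and B=B' and C=C' and D=D']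
  have "A = A'" using ra assms by metis
  moreover have "B = B'" using rb assms by metis
  moreover have "C = C'" using rc assms by metis
  moreover have "D = D'" using rd assms by metis
  ultimately show ?thesis by simp
qed

lemma rot_z:
  assumes "rot a2 b2 a1 b1 A B C D = (E, F, G, H)"
  shows "z1 E F G H = (a2 + \<i>*b2) * (a1 - \<i>*b1) * z1 A B C D"
    "z2 E F G H = (a2 - \<i>*b2) * (a1 + \<i>*b1) * z2 A B C D"
    "z3 E F G H = (a2 + \<i>*b2) * (a1 + \<i>*b1) * z3 A B C D"
    "z4 E F G H = (a2 - \<i>*b2) * (a1 - \<i>*b1) * z4 A B C D"
  using assms ii2 unfolding rot_def Let_def z1_def z2_def z3_def z4_def
  by (auto; algebra)+

lemma zz12: "z1 A B C D * z2 A B C D = (A+D)^2 + (C-B)^2"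
  unfolding z1_def z2_def using ii2 by algebra
lemma zz34: "z3 A B C D * z4 A B C D = (A-D)^2 + (B+C)^2"
  unfolding z3_def z4_def using ii2 by algebra

lemma so2_sep:
  assumes nz: "z1 A' B' C' D' \<noteq> 0" "z2 A' B' C' D' \<noteq> 0" "z3 A' B' C' D' \<noteq> 0" "z4 A' B' C' D' \<noteq> 0"
    and e12: "z1 A B C D * z2 A B C D = z1 A' B' C' D' * z2 A' B' C' D'"
    and e34: "z3 A B C D * z4 A B C D = z3 A' B' C' D' * z4 A' B' C' D'"
  shows "\<exists>a1 b1 a2 b2. a1^2 + b1^2 = 1 \<and> a2^2 + b2^2 = 1 \<and> rot a2 b2 a1 b1 A B C D = (A', B', C', D')"
proof -
  define w1 w2 w3 w4 where "w1 = z1 A B C D" "w2 = z2 A B C D" "w3 = z3 A B C D" "w4 = z4 A B C D"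
  define u1 u2 u3 u4 where "u1 = z1 A' B' C' D'" "u2 = z2 A' B' C' D'" "u3 = z3 A' B' C' D'" "u4 = z4 A' B' C' D'"
  have u: "u1 \<noteq> 0" "u2 \<noteq> 0" "u3 \<noteq> 0" "u4 \<noteq> 0" using nz u1_u2_u3_u4_def by auto
  have e12': "w1 * w2 = u1 * u2" and e34': "w3 * w4 = u3 * u4" using e12 e34 w1_w2_w3_w4_def u1_u2_u3_u4_def by auto
  have w: "w1 \<noteq> 0" "w2 \<noteq> 0" "w3 \<noteq> 0" "w4 \<noteq> 0" using e12' e34' u by auto
  define mu nu where "mu = u1 / w1" "nu = u3 / w3"
  have munz: "mu \<noteq> 0" "nu \<noteq> 0" using u w mu_nu_def by auto
  define l2 where "l2 = csqrt (mu * nu)"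
  have l2sq: "l2 * l2 = mu * nu" unfolding l2_def by (metis power2_csqrt power2_eq_square)
  have l2nz: "l2 \<noteq> 0" using l2sq munz by auto
  define l1 where "l1 = l2 / mu"
  have l1nz: "l1 \<noteq> 0" using l2nz munz l1_def by auto
  define a1 b1 a2 b2 where "a1 = (l1 + 1/l1)/2" "b1 = (l1 - 1/l1)/(2*\<i>)" "a2 = (l2 + 1/l2)/2" "b2 = (l2 - 1/l2)/(2*\<i>)"
  have p1: "a1 + \<i>*b1 = l1" "a1 - \<i>*b1 = 1/l1" "a2 + \<i>*b2 = l2" "a2 - \<i>*b2 = 1/l2"
    unfolding a1_b1_a2_b2_def by (simp_all add: field_simps)
  have n1: "a1^2 + b1^2 = 1"
  proof -
    have "a1^2 + b1^2 = (a1 + \<i>*b1) * (a1 - \<i>*b1)" using ii2 by algebra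
    then show ?thesis using p1 l1nz by simp
  qed
  have n2: "a2^2 + b2^2 = 1"
  proof -
    have "a2^2 + b2^2 = (a2 + \<i>*b2) * (a2 - \<i>*b2)" using ii2 by algebra
    then show ?thesis using p1 l2nz by simp
  qed
  obtain E F G H where r: "rot a2 b2 a1 b1 A B C D = (E, F, G, H)" by (metis prod_cases4)
  note rz = rot_z[OF r, unfolded p1]
  have "z1 E F G H = u1" using rz(1) l1nz munz w unfolding l1_def mu_nu_def w1_w2_w3_w4_def[symmetric] by (simp add: field_simps)
  moreover have "z2 E F G H = u2"
  proof -
    have "z2 E F G H = w2 / mu" using rz(2) l1nz l2nz munz unfolding l1_def w1_w2_w3_w4_def[symmetric] by (simp add: field_simps)
    also have "\<dots> = u2" using e12' w u unfolding mu_nu_def by (simp add: field_simps)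
    finally show ?thesis .
  qed
  moreover have "z3 E F G H = u3"
  proof -
    have "z3 E F G H = (l2 * l2 / mu) * w3" using rz(3) l1nz l2nz munz unfolding l1_def w1_w2_w3_w4_def[symmetric] by (simp add: field_simps)
    also have "\<dots> = u3" using l2sq munz w unfolding mu_nu_def by (simp add: field_simps)
    finally show ?thesis .
  qed
  moreover have "z4 E F G H = u4"
  proof -
    have "z4 E F G H = w4 * mu / (l2 * l2)" using rz(4) l1nz l2nz munz unfolding l1_def w1_w2_w3_w4_def[symmetric] by (simp add: field_simps)
    also have "\<dots> = w4 * mu / (mu * nu)" using l2sq by simp
    also have "\<dots> = u4" using munz w e34' u unfolding mu_nu_def by (simp add: field_simps)
    finally show ?thesis .
  qed
  ultimately have "(E, F, G, H) = (A', B', C', D')" using z_inj u1_u2_u3_u4_def by blast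
  then show ?thesis using n1 n2 r by blast
qed



definition mk0 :: "complex \<Rightarrow> complex \<Rightarrow> complex \<Rightarrow> complex \<Rightarrow> complex \<Rightarrow> complex \<Rightarrow> complex \<Rightarrow> pt" where
  "mk0 v w A B C D e = (vector[0,0,v], vector[0,0,w], vector[vector[A,B,0], vector[C,D,0], vector[0,0,e]])"

lemma mk0_X0: "mk0 v w A B C D e \<in> X0"
  by (simp add: mk0_def X0_def forall_3)

lemma X0_mk0: assumes "x \<in> X0" shows "\<exists>v w A B C D e. x = mk0 v w A B C D e"
proof -
  obtain v w C where x: "x = (v, w, C)" by (cases x) auto
  have "x = mk0 (v$3) (w$3) (C$1$1) (C$1$2) (C$2$1) (C$2$2) (C$3$3)"
    using assms unfolding x X0_def mk0_def by (auto simp: vec_eq_iff forall_3)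
  then show ?thesis by blast
qed

lemma pinv_mk0: "pinv (mk0 v w A B C D e) = [v^2, w^2, e * v * w, A^2+B^2+C^2+D^2+e^2, (A*D - B*C)*e]"
  by (simp add: mk0_def pinv_def p1_def p2_def p3_def p4_def p5_def bil_def sum_3 mtrace_def
      matrix_matrix_mult_def transpose_def det_3 matrix_vector_mult_def power2_eq_square algebra_simps)

lemma E_mk0: "E1 (mk0 v w A B C D e) = 0" "E2 (mk0 v w A B C D e) = 0"
  by (simp_all add: mk0_def E1_def E2_def bil_def sum_3 transpose_def matrix_vector_mult_def vec_eq_iff forall_3 algebra_simps)

lemma hfun_mk0: "hfun (mk0 v w A B C D e) = v^9 * w^9 * e^3 * (z1 A B C D * z2 A B C D) * (z3 A B C D * z4 A B C D)"
proof -
  have "hfun (mk0 v w A B C D e) = v^2 * w^2 * (e * v * w) * ((v^2 * w^2 * (A^2+B^2+C^2+D^2+e^2) - (e * v * w)^2)^2 * (e * v * w)^2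
        - 4 * ((A*D - B*C)*e)^2 * (v^2)^3 * (w^2)^3)"
    using pinv_mk0[of v w A B C D e] by (simp add: hfun_def pinv_def)
  also have "\<dots> = v^9 * w^9 * e^3 * ((A+D)^2 + (C-B)^2) * ((A-D)^2 + (B+C)^2)"
    by algebra
  finally show ?thesis by (simp add: zz12 zz34)
qed

definition blk :: "complex \<Rightarrow> complex \<Rightarrow> complex \<Rightarrow> complex^3^3" where
  "blk a b s = vector[vector[a, -s*b, 0], vector[b, s*a, 0], vector[0,0,s]]"

lemma blk_SO3: assumes "a^2 + b^2 = 1" "s^2 = 1" shows "blk a b s \<in> SO3"
proof -
  have "transpose (blk a b s) ** blk a b s = mat 1"
    using assms by (simp add: blk_def vec_eq_iff forall_3 matrix_matrix_mult_def transpose_def sum_3 mat_def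
       power2_eq_square algebra_simps)
  moreover have "det (blk a b s) = 1"
    using assms by (simp add: blk_def det_3 power2_eq_square algebra_simps)
  ultimately show ?thesis by (simp add: SO3_def)
qed

lemma act_blk_mk0:
  assumes "blk a1 b1 s1 \<in> SO3" "rot a2 b2 a1 b1 A (s1*B) (s2*C) (s1* s2*D) = (E, F, G, H)"
  shows "act (blk a1 b1 s1, blk a2 b2 s2) (mk0 v w A B C D e) = mk0 (s1* v) (s2* w) E F G H (s2*e* s1)"
proof -
  have r: "E = (a2 * A + - b2 * (s2*C)) * a1 + (a2 * (s1*B) + - b2 * (s1* s2*D)) * - b1"
     "F = (a2 * A + - b2 * (s2*C)) * b1 + (a2 * (s1*B) + - b2 * (s1* s2*D)) * a1"
     "G = (b2 * A + a2 * (s2*C)) * a1 + (b2 * (s1*B) + a2 * (s1* s2*D)) * - b1"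
     "H = (b2 * A + a2 * (s2*C)) * b1 + (b2 * (s1*B) + a2 * (s1* s2*D)) * a1"
    using assms(2) by (simp_all add: rot_def Let_def)
  show ?thesis
    unfolding act_simp[symmetric] SO3_inv[OF assms(1)] mk0_def act_simp
    apply (simp add: SO3_inv[OF assms(1)] blk_def vec_eq_iff forall_3 matrix_matrix_mult_def matrix_vector_mult_def transpose_def sum_3 r)
    apply (simp add: algebra_simps)
    done
qed

lemma X0_sep:
  assumes nz: "v \<noteq> 0" "w \<noteq> 0" "e \<noteq> 0"
    "z1 A' B' C' D' \<noteq> 0" "z2 A' B' C' D' \<noteq> 0" "z3 A' B' C' D' \<noteq> 0" "z4 A' B' C' D' \<noteq> 0"
    and eq: "pinv (mk0 v w A B C D e) = pinv (mk0 v' w' A' B' C' D' e')"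
  shows "\<exists>g\<in>Gset. mk0 v' w' A' B' C' D' e' = act g (mk0 v w A B C D e)"
proof -
  have q: "v^2 = v'^2" "w^2 = w'^2" "e * v * w = e' * v' * w'"
     "A^2+B^2+C^2+D^2+e^2 = A'^2+B'^2+C'^2+D'^2+e'^2" "(A*D - B*C)*e = (A'*D' - B'*C')*e'"
    using eq by (simp_all add: pinv_mk0)
  define s1 s2 where "s1 = v' / v" "s2 = w' / w"
  have sv: "v' = s1 * v" "w' = s2 * w" using nz s1_s2_def by auto
  have ss: "s1^2 = 1" "s2^2 = 1" using q(1,2) nz unfolding sv by (simp_all add: power_mult_distrib)
  have ss': "s1 * s1 = 1" "s2 * s2 = 1" using ss by (simp_all add: power2_eq_square)
  have e1: "e' * (s1 * s2) = e" using q(3) nz unfolding sv by (simp add: algebra_simps)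
  have e': "e' = s1 * s2 * e"
  proof -
    have "s1 * s2 * e = e' * ((s1 * s1) * (s2 * s2))" using e1 by (simp add: algebra_simps flip: e1)
    then show ?thesis using ss' by simp
  qed
  have ee: "e'^2 = e^2" using e' ss by (simp add: power_mult_distrib)
  have tt: "A^2+B^2+C^2+D^2 = A'^2+B'^2+C'^2+D'^2" using q(4) ee by simp
  have dd0: "(A*D - B*C) * e = (A'*D' - B'*C') * (s1 * s2) * e" using q(5) e' by (simp add: algebra_simps)
  have dd: "A'*D' - B'*C' = s1 * s2 * (A*D - B*C)"
  proof -
    have "A*D - B*C = (A'*D' - B'*C') * (s1 * s2)" using dd0 nz by simp
    then have "s1 * s2 * (A*D - B*C) = (A'*D' - B'*C') * ((s1 * s1) * (s2 * s2))" by algebra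
    then show ?thesis using ss' by simp
  qed
  have m12: "z1 A (s1*B) (s2*C) (s1* s2*D) * z2 A (s1*B) (s2*C) (s1* s2*D) = z1 A' B' C' D' * z2 A' B' C' D'"
  proof -
    have "z1 A (s1*B) (s2*C) (s1* s2*D) * z2 A (s1*B) (s2*C) (s1* s2*D)
        = A^2 + (s1* s1)*(s2* s2)*D^2 + (s2* s2)*C^2 + (s1* s1)*B^2 + 2*(s1* s2*(A*D - B*C))"
      unfolding zz12 by (simp add: power2_eq_square algebra_simps)
    also have "\<dots> = (A'+D')^2 + (C'-B')^2" unfolding ss' dd[symmetric] using tt
      by (simp add: power2_eq_square algebra_simps)
    finally show ?thesis unfolding zz12 .
  qed
  have m34: "z3 A (s1*B) (s2*C) (s1* s2*D) * z4 A (s1*B) (s2*C) (s1* s2*D) = z3 A' B' C' D' * z4 A' B' C' D'"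
  proof -
    have "z3 A (s1*B) (s2*C) (s1* s2*D) * z4 A (s1*B) (s2*C) (s1* s2*D)
        = A^2 + (s1* s1)*(s2* s2)*D^2 + (s2* s2)*C^2 + (s1* s1)*B^2 - 2*(s1* s2*(A*D - B*C))"
      unfolding zz34 by (simp add: power2_eq_square algebra_simps)
    also have "\<dots> = (A'-D')^2 + (B'+C')^2" unfolding ss' dd[symmetric] using tt
      by (simp add: power2_eq_square algebra_simps)
    finally show ?thesis unfolding zz34 .
  qed
  obtain a1 b1 a2 b2 where ab: "a1^2 + b1^2 = 1" "a2^2 + b2^2 = 1"
    "rot a2 b2 a1 b1 A (s1*B) (s2*C) (s1* s2*D) = (A', B', C', D')"
    using so2_sep[OF nz(4-7) m12 m34] by blast
  have g1: "blk a1 b1 s1 \<in> SO3" and g2: "blk a2 b2 s2 \<in> SO3" using blk_SO3 ab ss by auto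
  have "act (blk a1 b1 s1, blk a2 b2 s2) (mk0 v w A B C D e) = mk0 (s1* v) (s2* w) A' B' C' D' (s2*e* s1)"
    by (rule act_blk_mk0[OF g1 ab(3)])
  also have "\<dots> = mk0 v' w' A' B' C' D' e'" using sv e' by (simp add: algebra_simps)
  finally show ?thesis using g1 g2 unfolding Gset_def by (intro bexI[of _ "(blk a1 b1 s1, blk a2 b2 s2)"]) auto
qed



lemma act_comp:
  assumes "g1 \<in> SO3" "g2 \<in> SO3" "h1 \<in> SO3" "h2 \<in> SO3"
  shows "act (g1, g2) (act (h1, h2) x) = act (g1 ** h1, g2 ** h2) x"
proof -
  obtain v w C where x: "x = (v, w, C)" by (cases x) auto
  show ?thesis
    using assms by (simp add: x act_simp SO3_inv SO3_mult matrix_transpose_mul matrix_mul_assoc matrix_vector_mul_assoc)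
qed

lemma act_inv:
  assumes "g1 \<in> SO3" "g2 \<in> SO3"
  shows "act (transpose g1, transpose g2) (act (g1, g2) x) = x"
proof -
  have "act (transpose g1, transpose g2) (act (g1, g2) x) = act (mat 1, mat 1) x"
    using assms by (simp add: act_comp SO3_transpose SO3_tt)
  also have "\<dots> = x" using SO3_inv[OF SO3_one] by (cases x) (simp add: act_simp)
  finally show ?thesis .
qed

lemma E1_act:
  assumes "g \<in> Gset" "E1 x = 0" shows "E1 (act g x) = 0"
proof -
  obtain g1 g2 where g: "g = (g1, g2)" "g1 \<in> SO3" "g2 \<in> SO3" using assms by (auto simp: Gset_def)
  obtain v w C where x: "x = (v, w, C)" by (cases x) auto
  have Cv: "(g2 ** C ** transpose g1) *v (g1 *v v) = g2 *v (C *v v)"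
    by (simp add: matrix_vector_mul_assoc matrix_mul_assoc[symmetric] SO3_tt g del: transpose_matrix_vector)
  have e: "bil w w *s (C *v v) = bil (C *v v) w *s w" using assms(2) by (simp add: x E1_def)
  have "bil w w *s (g2 *v (C *v v)) = bil (C *v v) w *s (g2 *v w)"
    by (metis e vector_scalar_commute)
  then show ?thesis
    by (simp add: g x act_simp SO3_inv E1_def Cv bil_SO3)
qed

lemma E2_act:
  assumes "g \<in> Gset" "E2 x = 0" shows "E2 (act g x) = 0"
proof -
  obtain g1 g2 where g: "g = (g1, g2)" "g1 \<in> SO3" "g2 \<in> SO3" using assms by (auto simp: Gset_def)
  obtain v w C where x: "x = (v, w, C)" by (cases x) auto
  have Cw: "transpose (g2 ** C ** transpose g1) *v (g2 *v w) = g1 *v (transpose C *v w)"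
    by (simp add: matrix_transpose_mul matrix_vector_mul_assoc matrix_mul_assoc SO3_tt g del: transpose_matrix_vector)
       (simp add: matrix_mul_assoc[symmetric] SO3_tt g)
  have e: "bil v v *s (transpose C *v w) = bil (transpose C *v w) v *s v" using assms(2) by (simp add: x E2_def del: transpose_matrix_vector)
  have "bil v v *s (g1 *v (transpose C *v w)) = bil (transpose C *v w) v *s (g1 *v v)"
    by (metis e vector_scalar_commute)
  then show ?thesis
    by (simp add: g x act_simp SO3_inv E2_def Cw bil_SO3 del: transpose_matrix_vector)
qed

lemma GX0_Y: "g \<in> Gset \<Longrightarrow> y \<in> X0 \<Longrightarrow> act g y \<in> Yset"
proof -
  assume g: "g \<in> Gset" and y: "y \<in> X0"
  obtain v w A B C D e where "y = mk0 v w A B C D e" using X0_mk0[OF y] by blast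
  then have "E1 y = 0" "E2 y = 0" using E_mk0 by auto
  then show ?thesis using E1_act[OF g] E2_act[OF g] by (simp add: Yset_def)
qed

definition cross :: "complex^3 \<Rightarrow> complex^3 \<Rightarrow> complex^3" where
  "cross a b = vector[a$2 * b$3 - a$3 * b$2, a$3 * b$1 - a$1 * b$3, a$1 * b$2 - a$2 * b$1]"

definition cols :: "complex^3 \<Rightarrow> complex^3 \<Rightarrow> complex^3 \<Rightarrow> complex^3^3" where
  "cols m l n = vector[vector[m$1, l$1, n$1], vector[m$2, l$2, n$2], vector[m$3, l$3, n$3]]"

definition e3 :: "complex^3" where "e3 = vector[0,0,1]"

lemma bil3: "bil a b = a$1 * b$1 + a$2 * b$2 + a$3 * b$3"
  by (simp add: bil_def sum_3)

lemma bil_sym: "bil a b = bil b a" by (simp add: bil3 mult.commute)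
lemma bil_scale: "bil (c *s a) b = c * bil a b" by (simp add: bil3 algebra_simps)

lemma bil_scale2: "bil a (c *s b) = c * bil a b" by (simp add: bil3 algebra_simps)

lemma cross_orth: "bil (cross a b) a = 0" "bil (cross a b) b = 0"
  by (simp_all add: bil3 cross_def algebra_simps)

lemma cross_norm: "bil (cross a b) (cross a b) = bil a a * bil b b - (bil a b)^2"
  by (simp add: bil3 cross_def power2_eq_square algebra_simps)

lemma cross_cross: "cross (cross n m) n = bil n n *s m - bil n m *s n"
  by (simp add: bil3 cross_def vec_eq_iff forall_3 algebra_simps)

lemma det_cols: "det (cols m l n) = bil m (cross l n)"
  by (simp add: cols_def det_3 bil3 cross_def algebra_simps)

lemma tt_cols: "transpose (cols m l n) ** cols m l n =
   vector[vector[bil m m, bil m l, bil m n], vector[bil l m, bil l l, bil l n], vector[bil n m, bil n l, bil n n]]"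
  by (simp add: cols_def bil3 vec_eq_iff forall_3 matrix_matrix_mult_def transpose_def sum_3 algebra_simps)

lemma cols_e3: "cols m l n *v e3 = n"
  by (simp add: cols_def e3_def vec_eq_iff forall_3 matrix_vector_mult_def sum_3)

lemma frame: assumes "bil n n = 1" shows "\<exists>g\<in>SO3. g *v e3 = n"
proof -
  obtain e where e: "bil e e = 1" "(bil e n)^2 \<noteq> 1"
  proof -
    have "\<not> ((n$1)^2 = 1 \<and> (n$2)^2 = 1 \<and> (n$3)^2 = 1)"
    proof
      assume h: "(n$1)^2 = 1 \<and> (n$2)^2 = 1 \<and> (n$3)^2 = 1"
      have "bil n n = 3" using h by (simp add: bil3 power2_eq_square)
      then show False using assms by simp
    qed
    then consider "(n$1)^2 \<noteq> 1" | "(n$2)^2 \<noteq> 1" | "(n$3)^2 \<noteq> 1" by blast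
    then show ?thesis
    proof cases
      case 1 then show ?thesis using that[of "vector[1,0,0]"] by (simp add: bil3)
    next
      case 2 then show ?thesis using that[of "vector[0,1,0]"] by (simp add: bil3)
    next
      case 3 then show ?thesis using that[of "vector[0,0,1]"] by (simp add: bil3)
    qed
  qed
  define k where "k = cross e n"
  have kk: "bil k k \<noteq> 0" using e assms unfolding k_def cross_norm by simp
  define r where "r = csqrt (bil k k)"
  have rr: "r * r = bil k k" unfolding r_def by (metis power2_csqrt power2_eq_square)
  have rnz: "r \<noteq> 0" using rr kk by auto
  define m where "m = (1/r) *s k"
  have mm: "bil m m = 1" using rr rnz unfolding m_def bil_scale bil_scale2 by (simp add: field_simps flip: rr)
  have mn: "bil m n = 0" unfolding m_def k_def bil_scale cross_orth by simp
  define l where "l = cross n m"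
  have lm: "bil l m = 0" unfolding l_def cross_orth by simp
  have ln: "bil l n = 0" unfolding l_def cross_orth by simp
  have ll: "bil l l = 1" unfolding l_def cross_norm using assms mm mn by (simp add: bil_sym)
  have lnc: "cross l n = m" unfolding l_def cross_cross using assms mn by (simp add: bil_sym)
  define g where "g = cols m l n"
  have "transpose g ** g = mat 1"
    unfolding g_def tt_cols using mm mn lm ln ll assms
    by (simp add: bil_sym vec_eq_iff forall_3 mat_def)
  moreover have "det g = 1" unfolding g_def det_cols lnc mm by simp
  ultimately have "g \<in> SO3" by (simp add: SO3_def)
  moreover have "g *v e3 = n" unfolding g_def cols_e3 ..
  ultimately show ?thesis by blast
qed

lemma e3_nth: "e3 $ i = (if i = 3 then 1 else 0)"
  using exhaust_3[of i] by (auto simp: e3_def)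

lemma col3: "(M *v e3) $ b = M $ b $ 3"
  by (simp add: e3_def matrix_vector_mult_def sum_3)

lemma row3: "(transpose M *v e3) $ a = M $ 3 $ a"
  by (simp add: e3_def matrix_vector_mult_def sum_3 transpose_def del: transpose_matrix_vector)

lemma unit_frame:
  assumes "bil v v \<noteq> 0"
  shows "\<exists>g\<in>SO3. \<exists>s. s \<noteq> 0 \<and> transpose g *v v = s *s e3 \<and> g *v e3 = (1/s) *s v"
proof -
  define s where "s = csqrt (bil v v)"
  have ss: "s * s = bil v v" unfolding s_def by (metis power2_csqrt power2_eq_square)
  have snz: "s \<noteq> 0" using ss assms by auto
  define n where "n = (1/s) *s v"
  have "bil n n = 1" unfolding n_def bil_scale bil_scale2 using snz by (simp add: field_simps flip: ss)
  then obtain g where g: "g \<in> SO3" "g *v e3 = n" using frame by blast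
  have v: "v = s *s n" using snz by (simp add: n_def vector_smult_assoc)
  have "transpose g *v v = s *s ((transpose g ** g) *v e3)"
    by (simp add: v vector_scalar_commute matrix_vector_mul_assoc[symmetric] g del: transpose_matrix_vector)
  also have "\<dots> = s *s e3" using SO3_tt[OF g(1)] by simp
  finally show ?thesis using g snz n_def by blast
qed

lemma nf:
  assumes "x \<in> Yset" "p1 x \<noteq> 0" "p2 x \<noteq> 0"
  shows "\<exists>g\<in>Gset. \<exists>y\<in>X0. x = act g y"
proof -
  obtain v w C where x: "x = (v, w, C)" by (cases x) auto
  have bv: "bil v v \<noteq> 0" and bw: "bil w w \<noteq> 0" using assms(2,3) by (auto simp: x p1_def p2_def)
  have E1: "bil w w *s (C *v v) = bil (C *v v) w *s w" and E2: "bil v v *s (transpose C *v w) = bil (transpose C *v w) v *s v"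
    using assms(1) by (auto simp: x Yset_def E1_def E2_def simp del: transpose_matrix_vector)
  define c1 where "c1 = bil (C *v v) w / bil w w"
  define c2 where "c2 = bil (transpose C *v w) v / bil v v"
  have Cv: "C *v v = c1 *s w"
  proof -
    have "C *v v = (1 / bil w w) *s (bil w w *s (C *v v))" using bw by (simp add: vector_smult_assoc)
    also have "\<dots> = c1 *s w" unfolding E1 c1_def by (simp add: vector_smult_assoc)
    finally show ?thesis .
  qed
  have Cw: "transpose C *v w = c2 *s v"
  proof -
    have "transpose C *v w = (1 / bil v v) *s (bil v v *s (transpose C *v w))" using bv by (simp add: vector_smult_assoc)
    also have "\<dots> = c2 *s v" unfolding E2 c2_def by (simp add: vector_smult_assoc)
    finally show ?thesis .
  qed
  obtain g1 sv where g1: "g1 \<in> SO3" "sv \<noteq> 0" "transpose g1 *v v = sv *s e3" "g1 *v e3 = (1/sv) *s v"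
    using unit_frame[OF bv] by blast
  obtain g2 sw where g2: "g2 \<in> SO3" "sw \<noteq> 0" "transpose g2 *v w = sw *s e3" "g2 *v e3 = (1/sw) *s w"
    using unit_frame[OF bw] by blast
  define M where "M = transpose g2 ** C ** g1"
  have Me: "M *v e3 = (1/sv * c1 * sw) *s e3"
  proof -
    have "M *v e3 = transpose g2 *v (C *v (g1 *v e3))" by (simp add: M_def matrix_vector_mul_assoc matrix_mul_assoc del: transpose_matrix_vector)
    also have "\<dots> = (1/sv * c1) *s (transpose g2 *v w)"
      by (simp add: g1(4) Cv vector_scalar_commute vector_smult_assoc del: transpose_matrix_vector)
    also have "\<dots> = (1/sv * c1 * sw) *s e3" by (simp add: g2(3) vector_smult_assoc del: transpose_matrix_vector)
    finally show ?thesis .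
  qed
  have Mte: "transpose M *v e3 = (1/sw * c2 * sv) *s e3"
  proof -
    have "transpose M *v e3 = transpose g1 *v (transpose C *v (g2 *v e3))"
      by (simp add: M_def matrix_transpose_mul matrix_vector_mul_assoc matrix_mul_assoc del: transpose_matrix_vector)
    also have "\<dots> = (1/sw * c2) *s (transpose g1 *v v)"
      by (simp add: g2(4) Cw vector_scalar_commute vector_smult_assoc del: transpose_matrix_vector)
    also have "\<dots> = (1/sw * c2 * sv) *s e3" by (simp add: g1(3) vector_smult_assoc del: transpose_matrix_vector)
    finally show ?thesis .
  qed
  define y where "y = (transpose g1 *v v, transpose g2 *v w, M)"
  have "y \<in> X0"
  proof -
    have "M $ b $ a = 0" if "(a = 3) \<noteq> (b = 3)" for a b
    proof (cases "a = 3")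
      case True
      then have "b \<noteq> 3" using that by simp
      then show ?thesis using col3[of M b] Me True by (simp add: e3_nth)
    next
      case False
      then have "b = 3" using that by simp
      then show ?thesis using row3[of M a] Mte False by (simp add: e3_nth)
    qed
    then show ?thesis unfolding y_def X0_def using g1(3) g2(3) by (simp del: transpose_matrix_vector add: e3_nth)
  qed
  moreover have "x = act (g1, g2) y"
  proof -
    have "act (g1, g2) y = (g1 *v (transpose g1 *v v), g2 *v (transpose g2 *v w), g2 ** (transpose g2 ** C ** g1) ** transpose g1)"
      by (simp add: y_def M_def act_simp SO3_inv g1(1) del: transpose_matrix_vector)
    also have "\<dots> = (v, w, C)"
      by (simp add: matrix_vector_mul_assoc matrix_mul_assoc SO3_tt2 g1(1) g2(1) del: transpose_matrix_vector)
         (simp add: matrix_mul_assoc[symmetric] SO3_tt2 g1(1))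
    finally show ?thesis by (simp add: x)
  qed
  moreover have "(g1, g2) \<in> Gset" using g1 g2 by (simp add: Gset_def)
  ultimately show ?thesis by blast
qed



lemma pf_tendsto:
  assumes X: "(X \<longlongrightarrow> x) F"
  shows "f \<in> poly_fun \<Longrightarrow> ((\<lambda>t. f (X t)) \<longlongrightarrow> f x) F"
proof (induction f rule: poly_fun.induct)
  case (const c) then show ?case by simp
next
  case (coord_v i) then show ?case by (simp add: split_beta) (intro tendsto_intros X)
next
  case (coord_w i) then show ?case by (simp add: split_beta) (intro tendsto_intros X)
next
  case (coord_C i j) then show ?case by (simp add: split_beta) (intro tendsto_intros X)
next
  case (add f g) then show ?case by (intro tendsto_intros)
next
  case (mult f g) then show ?case by (intro tendsto_intros)
qed

lemma mv_tendsto: assumes "(u \<longlongrightarrow> u0) F" shows "((\<lambda>t. (A::complex^3^3) *v u t) \<longlongrightarrow> A *v u0) F"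
  by (rule vec_tendstoI) (auto simp: matrix_vector_mult_def intro!: tendsto_intros assms)

lemma mm_tendsto: assumes "(B \<longlongrightarrow> B0) F"
  shows "((\<lambda>t. (A::complex^3^3) ** B t ** M) \<longlongrightarrow> A ** B0 ** M) F"
  apply (rule vec_tendstoI)
  apply (rule vec_tendstoI)
  apply (auto simp: matrix_matrix_mult_def intro!: tendsto_intros assms)
  done

lemma act_tendsto: assumes "(X \<longlongrightarrow> x) F" shows "((\<lambda>t. act g (X t)) \<longlongrightarrow> act g x) F"
proof -
  obtain g1 g2 where g: "g = (g1, g2)" by (cases g) auto
  have eq: "act g y = (g1 *v fst y, g2 *v fst (snd y), g2 ** snd (snd y) ** matrix_inv g1)" for y
    by (cases y) (simp add: g act_simp)
  show ?thesis unfolding eq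
    by (intro tendsto_Pair mv_tendsto mm_tendsto tendsto_fst tendsto_snd assms)
qed

lemma vec3_tendsto:
  assumes "(f1 \<longlongrightarrow> a1) F" "(f2 \<longlongrightarrow> a2) F" "(f3 \<longlongrightarrow> a3) F"
  shows "((\<lambda>t. vector[f1 t, f2 t, f3 t] :: 'a::{real_normed_vector}^3) \<longlongrightarrow> vector[a1, a2, a3]) F"
proof (rule vec_tendstoI)
  fix i :: 3
  show "((\<lambda>t. vector [f1 t, f2 t, f3 t] $ i) \<longlongrightarrow> (vector [a1, a2, a3] :: 'a^3) $ i) F"
    using exhaust_3[of i] assms by auto
qed

lemma mk0_tendsto:
  "((\<lambda>t::complex. mk0 (v + t) (w + t) (A + t) B C D (e + t)) \<longlongrightarrow> mk0 v w A B C D e) (at 0)"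
proof -
  have c: "((\<lambda>t::complex. a + t) \<longlongrightarrow> a) (at 0)" for a
    using tendsto_add[OF tendsto_const[of a] tendsto_ident_at[of 0 UNIV]] by simp
  show ?thesis unfolding mk0_def
    by (intro tendsto_Pair vec3_tendsto c tendsto_const)
qed

lemma dens:
  assumes S: "zariski_closed S"
    and hS: "\<And>g y. g \<in> Gset \<Longrightarrow> y \<in> X0 \<Longrightarrow> hfun y \<noteq> 0 \<Longrightarrow> act g y \<in> S"
    and g: "g \<in> Gset" and y: "y \<in> X0"
  shows "act g y \<in> S"
proof -
  obtain F where F: "F \<subseteq> poly_fun" "S = {x. \<forall>f\<in>F. f x = 0}" using S unfolding zariski_closed_def by blast
  obtain v w A B C D e where y0: "y = mk0 v w A B C D e" using X0_mk0[OF y] by blast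
  define Y where "Y t = mk0 (v + t) (w + t) (A + t) B C D (e + t)" for t
  have zs: "z1 (A + t) B C D = z1 A B C D + t" "z2 (A + t) B C D = z2 A B C D + t"
    "z3 (A + t) B C D = z3 A B C D + t" "z4 (A + t) B C D = z4 A B C D + t" for t
    by (simp_all add: z1_def z2_def z3_def z4_def algebra_simps)
  have "\<forall>\<^sub>F t in at (0::complex). t \<noteq> -v \<and> t \<noteq> -w \<and> t \<noteq> -e \<and> t \<noteq> - z1 A B C D \<and> t \<noteq> - z2 A B C D
      \<and> t \<noteq> - z3 A B C D \<and> t \<noteq> - z4 A B C D"
    by (intro eventually_conj eventually_neq_at_within)
  then have ev: "\<forall>\<^sub>F t in at (0::complex). act g (Y t) \<in> S"
  proof (rule eventually_mono)
    fix t assume h: "t \<noteq> -v \<and> t \<noteq> -w \<and> t \<noteq> -e \<and> t \<noteq> - z1 A B C D \<and> t \<noteq> - z2 A B C D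
      \<and> t \<noteq> - z3 A B C D \<and> t \<noteq> - z4 A B C D"
    have "hfun (Y t) \<noteq> 0" unfolding Y_def hfun_mk0 zs using h by (auto simp: add_eq_0_iff)
    then show "act g (Y t) \<in> S" using hS[OF g mk0_X0] Y_def by simp
  qed
  have "f (act g y) = 0" if f: "f \<in> F" for f
  proof -
    have lim: "((\<lambda>t. f (act g (Y t))) \<longlongrightarrow> f (act g y)) (at 0)"
      using pf_tendsto[OF act_tendsto[OF mk0_tendsto]] f F(1) unfolding Y_def y0 by blast
    have "\<forall>\<^sub>F t in at (0::complex). f (act g (Y t)) = 0" using ev F(2) f by (auto elim: eventually_mono)
    then have "((\<lambda>t. f (act g (Y t))) \<longlongrightarrow> 0) (at (0::complex))" by (rule tendsto_eventually)
    then show ?thesis using tendsto_unique[OF at_neq_bot lim] by simp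
  qed
  then show ?thesis using F(2) by simp
qed



lemma zc_Inter: assumes "\<And>S. S \<in> SS \<Longrightarrow> zariski_closed S" shows "zariski_closed (\<Inter>SS)"
proof -
  have "\<forall>S\<in>SS. \<exists>F. F \<subseteq> poly_fun \<and> S = {x. \<forall>f\<in>F. f x = 0}" using assms unfolding zariski_closed_def by blast
  then obtain FF where FF0: "\<forall>S\<in>SS. FF S \<subseteq> poly_fun \<and> S = {x. \<forall>f\<in>FF S. f x = 0}"
    using bchoice[of SS "\<lambda>S F. F \<subseteq> poly_fun \<and> S = {x. \<forall>f\<in>F. f x = 0}"] by blast
  then have FF: "\<And>S. S \<in> SS \<Longrightarrow> FF S \<subseteq> poly_fun \<and> S = {x. \<forall>f\<in>FF S. f x = 0}" by blast
  have "\<Inter>SS = {x. \<forall>f\<in>(\<Union>S\<in>SS. FF S). f x = 0}"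
  proof (intro set_eqI iffI)
    fix x assume "x \<in> \<Inter>SS"
    then show "x \<in> {x. \<forall>f\<in>(\<Union>S\<in>SS. FF S). f x = 0}" using FF by blast
  next
    fix x assume "x \<in> {x. \<forall>f\<in>(\<Union>S\<in>SS. FF S). f x = 0}"
    then show "x \<in> \<Inter>SS" using FF by blast
  qed
  moreover have "(\<Union>S\<in>SS. FF S) \<subseteq> poly_fun" using FF by blast
  ultimately show ?thesis unfolding zariski_closed_def by blast
qed

definition GX0 :: "pt set" where "GX0 = {act g x | g x. g \<in> Gset \<and> x \<in> X0}"

lemma X2_closed: "zariski_closed X2"
  unfolding X2_def zariski_closure_def by (rule zc_Inter) blast

lemma GX0_X2: "GX0 \<subseteq> X2"
  unfolding X2_def zariski_closure_def GX0_def by blast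

lemma X2_Y: "X2 \<subseteq> Yset"
proof -
  have "GX0 \<subseteq> Yset" using GX0_Y unfolding GX0_def by blast
  then show ?thesis unfolding X2_def zariski_closure_def GX0_def using Yset_closed by blast
qed

lemma X2_sub: "zariski_closed S \<Longrightarrow> GX0 \<subseteq> S \<Longrightarrow> X2 \<subseteq> S"
  unfolding X2_def zariski_closure_def GX0_def by blast

lemma sep:
  assumes x1: "x1 \<in> X2" "hfun x1 \<noteq> 0" and x2: "x2 \<in> X2" "hfun x2 \<noteq> 0" and eq: "pinv x1 = pinv x2"
  shows "\<exists>g\<in>Gset. x2 = act g x1"
proof -
  have p1: "p1 x1 \<noteq> 0" "p2 x1 \<noteq> 0" using x1(2) by (auto simp: hfun_def)
  have p2: "p1 x2 \<noteq> 0" "p2 x2 \<noteq> 0" using x2(2) by (auto simp: hfun_def)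
  obtain g y where g: "g \<in> Gset" "y \<in> X0" "x1 = act g y" using nf[OF _ p1] X2_Y x1(1) by blast
  obtain h y' where h: "h \<in> Gset" "y' \<in> X0" "x2 = act h y'" using nf[OF _ p2] X2_Y x2(1) by blast
  obtain v w A B C D e where y: "y = mk0 v w A B C D e" using X0_mk0[OF g(2)] by blast
  obtain v' w' A' B' C' D' e' where y': "y' = mk0 v' w' A' B' C' D' e'" using X0_mk0[OF h(2)] by blast
  have hy: "hfun y \<noteq> 0" using x1(2) g hfun_act by simp
  have hy': "hfun y' \<noteq> 0" using x2(2) h hfun_act by simp
  have ny: "v \<noteq> 0" "w \<noteq> 0" "e \<noteq> 0" using hy unfolding y hfun_mk0 by auto
  have ny': "z1 A' B' C' D' \<noteq> 0" "z2 A' B' C' D' \<noteq> 0" "z3 A' B' C' D' \<noteq> 0" "z4 A' B' C' D' \<noteq> 0"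
    using hy' unfolding y' hfun_mk0 by auto
  have "pinv y = pinv y'" using eq g h pinv_act by simp
  then obtain k where k: "k \<in> Gset" "y' = act k y" using X0_sep[OF ny ny'] y y' by blast
  obtain a b where gab: "g = (a, b)" "a \<in> SO3" "b \<in> SO3" using g(1) by (auto simp: Gset_def)
  obtain k1 k2 where kk: "k = (k1, k2)" "k1 \<in> SO3" "k2 \<in> SO3" using k(1) by (auto simp: Gset_def)
  obtain h1 h2 where hh: "h = (h1, h2)" "h1 \<in> SO3" "h2 \<in> SO3" using h(1) by (auto simp: Gset_def)
  have yx: "y = act (transpose a, transpose b) x1" using act_inv[OF gab(2,3)] g(3) gab(1) by simp
  have "x2 = act (h1, h2) (act (k1, k2) (act (transpose a, transpose b) x1))" using h(3) k(2) yx hh kk by simp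
  also have "\<dots> = act (h1 ** (k1 ** transpose a), h2 ** (k2 ** transpose b)) x1"
    using gab hh kk by (simp add: act_comp SO3_transpose SO3_mult)
  finally show ?thesis using gab hh kk by (intro bexI[of _ "(h1 ** (k1 ** transpose a), h2 ** (k2 ** transpose b))"])
     (auto simp: Gset_def SO3_transpose SO3_mult)
qed

theorem propositionB6:
  shows "(\<forall>g\<in>Gset. \<forall>x\<in>X2. pinv (act g x) = pinv x) \<and>
    (\<exists>U Z. zariski_closed Z \<and> U = X2 - Z \<and> zariski_closure U = X2 \<and>
      (\<forall>x1\<in>U. \<forall>x2\<in>U. pinv x1 = pinv x2 \<longrightarrow> (\<exists>g\<in>Gset. x2 = act g x1)))"
proof (intro conjI)
  show "\<forall>g\<in>Gset. \<forall>x\<in>X2. pinv (act g x) = pinv x" using pinv_act by blast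
  define Z where "Z = {x. hfun x = 0}"
  define U where "U = X2 - Z"
  have cl: "zariski_closure U = X2"
  proof
    show "zariski_closure U \<subseteq> X2" unfolding zariski_closure_def U_def using X2_closed by blast
  next
    show "X2 \<subseteq> zariski_closure U"
      unfolding zariski_closure_def
    proof (rule Inter_greatest)
      fix S assume "S \<in> {S. zariski_closed S \<and> U \<subseteq> S}"
      then have S: "zariski_closed S" "U \<subseteq> S" by auto
      have "GX0 \<subseteq> S"
      proof
        fix x assume "x \<in> GX0"
        then obtain g y where gy: "g \<in> Gset" "y \<in> X0" "x = act g y" unfolding GX0_def by blast
        have "act g y \<in> S"
        proof (rule dens[OF S(1) _ gy(1,2)])
          fix g y assume "g \<in> Gset" "y \<in> X0" "hfun y \<noteq> 0"
          from \<open>g \<in> Gset\<close> \<open>y \<in> X0\<close> have "act g y \<in> GX0" unfolding GX0_def by blast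
          then have "act g y \<in> X2" using GX0_X2 by blast
          moreover have "hfun (act g y) \<noteq> 0" using hfun_act \<open>g \<in> Gset\<close> \<open>hfun y \<noteq> 0\<close> by simp
          ultimately have "act g y \<in> U" unfolding U_def Z_def by blast
          then show "act g y \<in> S" using S(2) by blast
        qed
        then show "x \<in> S" using gy by simp
      qed
      then show "X2 \<subseteq> S" using X2_sub S(1) by blast
    qed
  qed
  have "\<forall>x1\<in>U. \<forall>x2\<in>U. pinv x1 = pinv x2 \<longrightarrow> (\<exists>g\<in>Gset. x2 = act g x1)"
    using sep unfolding U_def Z_def by blast
  then show "\<exists>U Z. zariski_closed Z \<and> U = X2 - Z \<and> zariski_closure U = X2 \<and>
      (\<forall>x1\<in>U. \<forall>x2\<in>U. pinv x1 = pinv x2 \<longrightarrow> (\<exists>g\<in>Gset. x2 = act g x1))"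
    using Z_closed cl unfolding U_def Z_def by blast
qed


end
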